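(* Let $d\ge 3$, let $\mathcal M$ be a model of $\mathrm{PQM}_d$, and let $\varphi(x)$ be an $\mathcal L_d$-formula in the single free variable $x$ which is a finite conjunction of literals, each of the form $[t(x):p]$ or $\neg[t(x):p]$ with $p\in\mathbb H_d$ and $t(x)$ a term obtained from $x$ by applying finitely many function symbols $u_U$, $\pi_q$. If $\mathcal M\models\exists x\,\varphi(x)$, then $\mathcal H_d\models\exists x\,\varphi(x)$.
   Context: Notation. For $d\ge 1$, $\mathbb H_d$ is the set of complex linear subspaces of $\mathbb C^d$, ordered by inclusion $\le$, with $\top=\mathbb C^d$, $\bot=\{0\}$, $p^\bot$ the orthogonal complement, $p\wedge q=p\cap q$ and $p\vee q=p+q$. $\mathbb U_d$ is the set of unitary operators on $\mathbb C^d$, and for $U\in\mathbb U_d$, $p\in\mathbb H_d$, $U(p)=\{Uv: v\in p\}$. The Sasaki projection is $p\,\&\,q := q\cap(q^\bot+p)$. Subspaces $p,q$ are compatible iff $p=(p\wedge q)\vee(p\wedge q^\bot)$. Language $\mathcal L_d$: a first-order language without equality and without constants, having a unary function symbol $u_U$ for each $U\in\mathbb U_d$, a unary function symbol $\pi_q$ for each $q\in\mathbb H_d$, and a unary relation symbol $[\,\cdot:p]$ for each $p\in\mathbb H_d$. Theory $\mathrm{PQM}_d$ (over $\mathcal L_d$) has the following axioms, for all $p,q\in\mathbb H_d$ and $U\in\mathbb U_d$: ($\neg\bot$) $\exists x\,\neg[x:\bot]$; ($\top$) $\forall x\,[x:\top]$; ($\le$) if $p\le q$: $\forall x\,([x:p]\to[x:q])$;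 ($\wedge$) if $p,q$ are compatible: $\forall x\,([x:p]\wedge[x:q]\to[x:p\wedge q])$; ($\pi_i$) $\forall x\,([x:p]\to[\pi_q(x):p\,\&\,q])$; ($\pi_c$) if $p\le q$: $\forall x\,([\pi_p(\pi_q(x)):\bot]\to[\pi_p(x):\bot])$; ($\pi_\bot$) $\forall x\,([\pi_q(x):\bot]\to[x:q^\bot])$; ($u_i$) $\forall x\,([x:p]\to[u_U(x):U(p)])$; ($u_e$) $\forall x\,([u_U(x):p]\to[x:U^{-1}(p)])$. Hilbert model $\mathcal H_d$: the $\mathcal L_d$-structure with domain $\mathbb H_d$, $u_U^{\mathcal H_d}(x)=U(x)$, $\pi_q^{\mathcal H_d}(x)=x\,\&\,q$, and $[x:p]^{\mathcal H_d}$ holds iff $x\le p$. *)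

theory Defs
  imports "HOL-Analysis.Analysis"
begin

text \<open>Vectors of C^d are represented as complex ^ 'n with d = CARD('n).\<close>

type_synonym 'n cvec = "complex ^ 'n"
type_synonym 'n cmat = "complex ^ 'n ^ 'n"

definition csubspace :: "'n::finite cvec set \<Rightarrow> bool" where
  "csubspace S \<longleftrightarrow> 0 \<in> S \<and> (\<forall>x\<in>S. \<forall>y\<in>S. x + y \<in> S)
      \<and> (\<forall>c::complex. \<forall>x\<in>S. (\<chi> i. c * x $ i) \<in> S)"

definition cinner :: "'n::finite cvec \<Rightarrow> 'n cvec \<Rightarrow> complex" where
  "cinner x y = (\<Sum>i\<in>UNIV. cnj (x $ i) * y $ i)"

definition orth :: "'n::finite cvec set \<Rightarrow> 'n cvec set" where
  "orth p = {x. \<forall>y\<in>p. cinner y x = 0}"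

definition join :: "'n::finite cvec set \<Rightarrow> 'n cvec set \<Rightarrow> 'n cvec set" where
  "join p q = {a + b | a b. a \<in> p \<and> b \<in> q}"

definition sasaki :: "'n::finite cvec set \<Rightarrow> 'n cvec set \<Rightarrow> 'n cvec set" where
  "sasaki p q = q \<inter> join (orth q) p"

definition compatible :: "'n::finite cvec set \<Rightarrow> 'n cvec set \<Rightarrow> bool" where
  "compatible p q \<longleftrightarrow> p = join (p \<inter> q) (p \<inter> orth q)"

definition cadj :: "'n::finite cmat \<Rightarrow> 'n cmat" where
  "cadj U = (\<chi> i j. cnj (U $ j $ i))"

definition unitary :: "'n::finite cmat \<Rightarrow> bool" where
  "unitary U \<longleftrightarrow> U ** cadj U = mat 1 \<and> cadj U ** U = mat 1"

definition uimg :: "'n::finite cmat \<Rightarrow> 'n cvec set \<Rightarrow> 'n cvec set" where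
  "uimg U p = (\<lambda>v. U *v v) ` p"

definition Hbot :: "'n::finite cvec set" where "Hbot = {0}"
definition Htop :: "'n::finite cvec set" where "Htop = UNIV"

datatype 'n tm = Xvar | UApp "'n cmat" "'n tm" | PiApp "'n cvec set" "'n tm"

text \<open>Literals [t:p] (True) or not [t:p] (False).\<close>
datatype 'n lit = Lit bool "'n tm" "'n cvec set"

fun wf_tm :: "'n::finite tm \<Rightarrow> bool" where
  "wf_tm Xvar = True"
| "wf_tm (UApp U t) = (unitary U \<and> wf_tm t)"
| "wf_tm (PiApp q t) = (csubspace q \<and> wf_tm t)"

fun wf_lit :: "'n::finite lit \<Rightarrow> bool" where
  "wf_lit (Lit b t p) = (wf_tm t \<and> csubspace p)"

fun eval_tm :: "('n cmat \<Rightarrow> 'a \<Rightarrow> 'a) \<Rightarrow> ('n cvec set \<Rightarrow> 'a \<Rightarrow> 'a) \<Rightarrow> 'n tm \<Rightarrow> 'a \<Rightarrow> 'a" where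
  "eval_tm uI piI Xvar x = x"
| "eval_tm uI piI (UApp U t) x = uI U (eval_tm uI piI t x)"
| "eval_tm uI piI (PiApp q t) x = piI q (eval_tm uI piI t x)"

fun sat_lit :: "('n cmat \<Rightarrow> 'a \<Rightarrow> 'a) \<Rightarrow> ('n cvec set \<Rightarrow> 'a \<Rightarrow> 'a) \<Rightarrow> ('n cvec set \<Rightarrow> 'a \<Rightarrow> bool)
      \<Rightarrow> 'n lit \<Rightarrow> 'a \<Rightarrow> bool" where
  "sat_lit uI piI rel (Lit b t p) x = (rel p (eval_tm uI piI t x) = b)"

definition sat_conj :: "('n cmat \<Rightarrow> 'a \<Rightarrow> 'a) \<Rightarrow> ('n cvec set \<Rightarrow> 'a \<Rightarrow> 'a) \<Rightarrow> ('n cvec set \<Rightarrow> 'a \<Rightarrow> bool)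
      \<Rightarrow> 'n lit list \<Rightarrow> 'a \<Rightarrow> bool" where
  "sat_conj uI piI rel phi x = (\<forall>l\<in>set phi. sat_lit uI piI rel l x)"

text \<open>Models of PQM_d, with domain the type 'a. rel p x means [x:p].\<close>
definition PQM_model :: "('n::finite cmat \<Rightarrow> 'a \<Rightarrow> 'a) \<Rightarrow> ('n cvec set \<Rightarrow> 'a \<Rightarrow> 'a)
      \<Rightarrow> ('n cvec set \<Rightarrow> 'a \<Rightarrow> bool) \<Rightarrow> bool" where
  "PQM_model uI piI rel \<longleftrightarrow>
     (\<exists>x. \<not> rel Hbot x)
   \<and> (\<forall>x. rel Htop x)
   \<and> (\<forall>p q. csubspace p \<longrightarrow> csubspace q \<longrightarrow> p \<subseteq> q \<longrightarrow> (\<forall>x. rel p x \<longrightarrow> rel q x))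
   \<and> (\<forall>p q. csubspace p \<longrightarrow> csubspace q \<longrightarrow> compatible p q \<longrightarrow>
         (\<forall>x. rel p x \<and> rel q x \<longrightarrow> rel (p \<inter> q) x))
   \<and> (\<forall>p q. csubspace p \<longrightarrow> csubspace q \<longrightarrow> (\<forall>x. rel p x \<longrightarrow> rel (sasaki p q) (piI q x)))
   \<and> (\<forall>p q. csubspace p \<longrightarrow> csubspace q \<longrightarrow> p \<subseteq> q \<longrightarrow>
         (\<forall>x. rel Hbot (piI p (piI q x)) \<longrightarrow> rel Hbot (piI p x)))
   \<and> (\<forall>q. csubspace q \<longrightarrow> (\<forall>x. rel Hbot (piI q x) \<longrightarrow> rel (orth q) x))
   \<and> (\<forall>p U. csubspace p \<longrightarrow> unitary U \<longrightarrow> (\<forall>x. rel p x \<longrightarrow> rel (uimg U p) (uI U x)))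
   \<and> (\<forall>p U. csubspace p \<longrightarrow> unitary U \<longrightarrow> (\<forall>x. rel p (uI U x) \<longrightarrow> rel (uimg (cadj U) p) x))"

text \<open>The Hilbert model H_d (domain: the complex subspaces).\<close>
definition H_u :: "'n::finite cmat \<Rightarrow> 'n cvec set \<Rightarrow> 'n cvec set" where
  "H_u U x = uimg U x"
definition H_pi :: "'n::finite cvec set \<Rightarrow> 'n cvec set \<Rightarrow> 'n cvec set" where
  "H_pi q x = sasaki x q"
definition H_rel :: "'n::finite cvec set \<Rightarrow> 'n cvec set \<Rightarrow> bool" where
  "H_rel p x \<longleftrightarrow> x \<subseteq> p"

end

theory Submission
  imports Defs
begin


lemma smult_def': "(\<chi> i. c * x $ i) = c *s x" by (simp add: vector_scalar_mult_def)

lemma csubspace_iff: "csubspace S \<longleftrightarrow> 0 \<in> S \<and> (\<forall>x\<in>S. \<forall>y\<in>S. x + y \<in> S) \<and> (\<forall>c x. x \<in> S \<longrightarrow> c *s x \<in> S)"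
  by (auto simp: csubspace_def smult_def')

lemma cinner_add_right: "cinner x (y + z) = cinner x y + cinner x z"
  by (simp add: cinner_def algebra_simps sum.distrib)
lemma cinner_add_left: "cinner (x + y) z = cinner x z + cinner y z"
  by (simp add: cinner_def algebra_simps sum.distrib)
lemma cinner_scale_right: "cinner x (c *s y) = c * cinner x y"
  by (simp add: cinner_def sum_distrib_left algebra_simps)
lemma cinner_scale_left: "cinner (c *s x) y = cnj c * cinner x y"
  by (simp add: cinner_def sum_distrib_left algebra_simps)
lemma cinner_diff_right: "cinner x (y - z) = cinner x y - cinner x z"
  by (simp add: cinner_def algebra_simps sum_subtractf)
lemma cinner_diff_left: "cinner (x - y) z = cinner x z - cinner y z"
  by (simp add: cinner_def algebra_simps sum_subtractf)
lemma cinner_neg_right: "cinner x (- y) = - cinner x y"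
  by (simp add: cinner_def sum_negf)
lemma cinner_neg_left: "cinner (- x) y = - cinner x y"
  by (simp add: cinner_def sum_negf)
lemma cinner_zero_right[simp]: "cinner x 0 = 0" by (simp add: cinner_def)
lemma cinner_zero_left[simp]: "cinner 0 x = 0" by (simp add: cinner_def)
lemma cinner_commute: "cinner y x = cnj (cinner x y)"
  by (simp add: cinner_def mult.commute)

lemma Re_cinner: "Re (cinner x y) = x \<bullet> y"
  by (simp add: cinner_def inner_vec_def inner_complex_def Re_sum)

lemma Im_cinner: "Im (cinner x y) = ((\<i>::complex) *s x) \<bullet> y"
proof -
  have "Re (cinner (\<i> *s x) y) = Im (cinner x y)"
    by (simp add: cinner_scale_left)
  then show ?thesis by (simp add: Re_cinner)
qed

lemma cinner_self: "cinner x x = of_real (x \<bullet> x)"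
proof -
  have "Im (cinner x x) = 0"
    by (simp add: cinner_def Im_sum)
  then show ?thesis by (metis Re_cinner complex_eq_iff Im_complex_of_real Re_complex_of_real)
qed

lemma cinner_self_eq_0[simp]: "cinner x x = 0 \<longleftrightarrow> x = 0"
  by (simp add: cinner_self)

lemma cinner_eq_0_iff: "cinner x y = 0 \<longleftrightarrow> x \<bullet> y = 0 \<and> ((\<i>::complex) *s x) \<bullet> y = 0"
  by (metis Im_cinner Re_cinner complex_eq_iff zero_complex.simps)

lemma scaleR_smult: "r *\<^sub>R x = complex_of_real r *s (x::'n::finite cvec)"
proof (rule vec_eq_iff[THEN iffD2], rule allI)
  fix i show "(r *\<^sub>R x) $ i = (complex_of_real r *s x) $ i"
    by (simp only: vector_scaleR_component vector_smult_component) (simp add: scaleR_conv_of_real)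
qed

lemma csubspace_subspace: "csubspace S \<Longrightarrow> subspace S"
  by (simp add: csubspace_iff subspace_def scaleR_smult)

lemma csubspace_span: "csubspace S \<Longrightarrow> span S = S"
  by (simp add: csubspace_subspace span_eq_iff)

lemma csubspace_0: "csubspace S \<Longrightarrow> 0 \<in> S" by (simp add: csubspace_iff)
lemma csubspace_add: "csubspace S \<Longrightarrow> x \<in> S \<Longrightarrow> y \<in> S \<Longrightarrow> x + y \<in> S" by (simp add: csubspace_iff)
lemma csubspace_smult: "csubspace S \<Longrightarrow> x \<in> S \<Longrightarrow> c *s x \<in> S" by (simp add: csubspace_iff)
lemma csubspace_neg: "csubspace S \<Longrightarrow> x \<in> S \<Longrightarrow> - x \<in> S"
  using csubspace_smult[of S x "-1"] by simp
lemma csubspace_diff: "csubspace S \<Longrightarrow> x \<in> S \<Longrightarrow> y \<in> S \<Longrightarrow> x - y \<in> S"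
  using csubspace_add[of S x "-y"] csubspace_neg by fastforce

lemma csubspace_orth: "csubspace (orth p)"
  by (auto simp: csubspace_iff orth_def cinner_add_right cinner_scale_right)

lemma csubspace_inter: "csubspace p \<Longrightarrow> csubspace q \<Longrightarrow> csubspace (p \<inter> q)"
  by (simp add: csubspace_iff)

lemma csubspace_UNIV: "csubspace UNIV" by (simp add: csubspace_iff)
lemma csubspace_zero: "csubspace {0}" by (simp add: csubspace_iff)

lemma orth_real: assumes "csubspace p" shows "orth p = {x. \<forall>y\<in>p. y \<bullet> x = 0}"
  using assms by (auto simp: orth_def cinner_eq_0_iff csubspace_iff)

lemma inter_orth: "csubspace p \<Longrightarrow> p \<inter> orth p = {0}"
  by (auto simp: orth_def csubspace_iff)

lemma decomp_exists: assumes "csubspace p"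
  obtains w r where "w \<in> p" "r \<in> orth p" "x = w + r"
proof -
  obtain y z where "y \<in> span p" "\<And>w. w \<in> span p \<Longrightarrow> orthogonal z w" "x = y + z"
    using orthogonal_subspace_decomp_exists by blast
  then show ?thesis using that[of y z] assms
    by (auto simp: csubspace_span orth_real orthogonal_def inner_commute)
qed

lemma decomp_unique: assumes "csubspace p" "w \<in> p" "r \<in> orth p" "w' \<in> p" "r' \<in> orth p" "w + r = w' + r'"
  shows "w = w'"
proof -
  have "w - w' = r' - r" using assms(6) by (simp add: algebra_simps)
  moreover have "w - w' \<in> p" by (simp add: assms csubspace_diff)
  moreover have "r' - r \<in> orth p" by (simp add: assms csubspace_diff csubspace_orth)
  ultimately have "w - w' \<in> p \<inter> orth p" by simp
  then show ?thesis using inter_orth[OF assms(1)] by simp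
qed

definition proj :: "'n::finite cvec set \<Rightarrow> 'n cvec \<Rightarrow> 'n cvec" where
  "proj q x = (THE w. w \<in> q \<and> x - w \<in> orth q)"

lemma proj_prop: assumes "csubspace q" shows "proj q x \<in> q \<and> x - proj q x \<in> orth q"
proof -
  obtain w r where wr: "w \<in> q" "r \<in> orth q" "x = w + r" using decomp_exists[OF assms] by blast
  have "\<exists>!w. w \<in> q \<and> x - w \<in> orth q"
  proof
    show "w \<in> q \<and> x - w \<in> orth q" using wr by simp
    fix w' assume "w' \<in> q \<and> x - w' \<in> orth q"
    then show "w' = w" using decomp_unique[OF assms, of w' "x - w'" w r] wr by simp
  qed
  then show ?thesis unfolding proj_def by (rule theI')
qed

lemma proj_in: "csubspace q \<Longrightarrow> proj q x \<in> q" using proj_prop by blast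
lemma proj_orth: "csubspace q \<Longrightarrow> x - proj q x \<in> orth q" using proj_prop by blast

lemma proj_unique: assumes "csubspace q" "w \<in> q" "x - w \<in> orth q" shows "proj q x = w"
  using decomp_unique[OF assms(1) proj_in[OF assms(1), of x] proj_orth[OF assms(1), of x] assms(2,3)] by simp

lemma proj_add: assumes "csubspace q" shows "proj q (x + y) = proj q x + proj q y"
proof (rule proj_unique[OF assms])
  show "proj q x + proj q y \<in> q" by (simp add: assms csubspace_add proj_in)
  have eq: "x + y - (proj q x + proj q y) = (x - proj q x) + (y - proj q y)" by (simp add: algebra_simps)
  show "x + y - (proj q x + proj q y) \<in> orth q"
    by (subst eq) (rule csubspace_add[OF csubspace_orth proj_orth[OF assms] proj_orth[OF assms]])
qed

lemma proj_smult: assumes "csubspace q" shows "proj q (c *s x) = c *s proj q x"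
proof (rule proj_unique[OF assms])
  show "c *s proj q x \<in> q" by (simp add: assms csubspace_smult proj_in)
  have eq: "c *s x - c *s proj q x = c *s (x - proj q x)" by (simp add: vector_ssub_ldistrib)
  show "c *s x - c *s proj q x \<in> orth q"
    by (subst eq) (rule csubspace_smult[OF csubspace_orth proj_orth[OF assms]])
qed

lemma proj_id: "csubspace q \<Longrightarrow> x \<in> q \<Longrightarrow> proj q x = x"
  by (rule proj_unique) (auto simp: csubspace_0 csubspace_orth)

lemma proj_zero_orth: "csubspace q \<Longrightarrow> x \<in> orth q \<Longrightarrow> proj q x = 0"
  by (rule proj_unique) (auto simp: csubspace_0 csubspace_orth)

lemma orth_orth: assumes "csubspace p" shows "orth (orth p) = p"
proof
  show "p \<subseteq> orth (orth p)"
    by (auto simp: orth_def) (metis cinner_commute complex_cnj_zero)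
  show "orth (orth p) \<subseteq> p"
  proof
    fix x assume x: "x \<in> orth (orth p)"
    define r where "r = x - proj p x"
    have r: "r \<in> orth p" using proj_orth[OF assms] r_def by simp
    have "cinner r x = 0" using x r by (simp add: orth_def)
    moreover have "cinner r (proj p x) = 0"
      using r proj_in[OF assms, of x] by (simp add: orth_def) (metis cinner_commute complex_cnj_zero)
    ultimately have "cinner r r = 0" by (simp add: r_def cinner_diff_right)
    then have "r = 0" by simp
    then show "x \<in> p" using proj_in[OF assms, of x] r_def by simp
  qed
qed

lemma orth_antimono: "p \<subseteq> q \<Longrightarrow> orth q \<subseteq> orth p"
  by (auto simp: orth_def)

lemma sasaki_proj: assumes "csubspace x" "csubspace q" shows "sasaki x q = proj q ` x"
proof
  show "sasaki x q \<subseteq> proj q ` x"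
  proof
    fix z assume "z \<in> sasaki x q"
    then obtain a b where z: "z \<in> q" "a \<in> orth q" "b \<in> x" "z = a + b"
      by (auto simp: sasaki_def join_def)
    have "proj q b = z"
    proof (rule proj_unique[OF assms(2) z(1)])
      have "b - z = - a" using z(4) by simp
      then show "b - z \<in> orth q" by (simp add: csubspace_neg csubspace_orth z(2))
    qed
    then show "z \<in> proj q ` x" using z(3) by blast
  qed
  show "proj q ` x \<subseteq> sasaki x q"
  proof
    fix z assume "z \<in> proj q ` x"
    then obtain b where b: "b \<in> x" "z = proj q b" by blast
    have "z = (- (b - proj q b)) + b" using b by simp
    moreover have "- (b - proj q b) \<in> orth q" by (rule csubspace_neg[OF csubspace_orth proj_orth[OF assms(2)]])
    ultimately have "z \<in> join (orth q) x" using b(1) unfolding join_def by blast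
    then show "z \<in> sasaki x q" using proj_in[OF assms(2)] b by (simp add: sasaki_def)
  qed
qed

definition clinear :: "('n::finite cvec \<Rightarrow> 'n cvec) \<Rightarrow> bool" where
  "clinear f \<longleftrightarrow> (\<forall>x y. f (x + y) = f x + f y) \<and> (\<forall>c x. f (c *s x) = c *s f x)"

lemma clinear_proj: "csubspace q \<Longrightarrow> clinear (proj q)"
  by (simp add: clinear_def proj_add proj_smult)

lemma clinear_zero: "clinear f \<Longrightarrow> f 0 = 0"
  unfolding clinear_def by (metis vector_smult_lzero)

lemma clinear_linear: "clinear f \<Longrightarrow> linear f"
  by (simp add: clinear_def linear_iff scaleR_smult)

lemma clinear_comp: "clinear f \<Longrightarrow> clinear g \<Longrightarrow> clinear (\<lambda>x. f (g x))"
  by (simp add: clinear_def)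

lemma clinear_id: "clinear (\<lambda>x. x)" by (simp add: clinear_def)

lemma clinear_mat: "clinear (\<lambda>v. (U::'n::finite cmat) *v v)"
  using matrix_vector_mul_linear_gen[of U]
  unfolding Vector_Spaces.linear_def module_hom_def module_hom_axioms_def clinear_def by auto

lemma csubspace_image: assumes f: "clinear f" and S: "csubspace S" shows "csubspace (f ` S)"
  unfolding csubspace_iff
proof (intro conjI ballI allI impI)
  show "0 \<in> f ` S" using clinear_zero[OF f] csubspace_0[OF S] by (metis image_eqI)
  fix x y assume "x \<in> f ` S" "y \<in> f ` S"
  then obtain a b where "a \<in> S" "b \<in> S" "x = f a" "y = f b" by blast
  then show "x + y \<in> f ` S" using f csubspace_add[OF S] unfolding clinear_def by (metis image_eqI)
next
  fix c x assume "x \<in> f ` S"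
  then obtain a where "a \<in> S" "x = f a" by blast
  then show "c *s x \<in> f ` S" using f csubspace_smult[OF S] unfolding clinear_def by (metis image_eqI)
qed

lemma csubspace_preimage: "clinear f \<Longrightarrow> csubspace S \<Longrightarrow> csubspace {x. f x \<in> S}"
  unfolding csubspace_iff by (auto simp: clinear_zero clinear_def)

lemma csubspace_join: assumes p: "csubspace p" and q: "csubspace q" shows "csubspace (join p q)"
  unfolding csubspace_iff
proof (intro conjI ballI allI impI)
  show "0 \<in> join p q" unfolding join_def using csubspace_0[OF p] csubspace_0[OF q] by force
  fix x y assume "x \<in> join p q" "y \<in> join p q"
  then obtain a b a' b' where "a \<in> p" "b \<in> q" "x = a + b" "a' \<in> p" "b' \<in> q" "y = a' + b'"
    unfolding join_def by blast
  moreover have "x + y = (a + a') + (b + b')" using calculation by (simp add: algebra_simps)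
  ultimately show "x + y \<in> join p q" unfolding join_def using csubspace_add[OF p] csubspace_add[OF q] by blast
next
  fix c x assume "x \<in> join p q"
  then obtain a b where "a \<in> p" "b \<in> q" "x = a + b" unfolding join_def by blast
  moreover have "c *s x = c *s a + c *s b" using calculation by (simp add: vector_add_ldistrib)
  ultimately show "c *s x \<in> join p q" unfolding join_def using csubspace_smult[OF p] csubspace_smult[OF q] by blast
qed



inductive_set Der :: "real^3 \<Rightarrow> real^3 \<Rightarrow> (real^3) set" for a0 b0 where
  D1: "a0 \<in> Der a0 b0"
| D2: "b0 \<in> Der a0 b0"
| D3: "x \<in> Der a0 b0 \<Longrightarrow> z \<in> Der a0 b0 \<Longrightarrow> w \<noteq> 0 \<Longrightarrow> (x \<bullet> z) * (w \<bullet> w) = (x \<bullet> w) * (w \<bullet> z) \<Longrightarrow> w \<in> Der a0 b0"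

lemma Der_scale: assumes "x \<in> Der a0 b0" "x \<noteq> 0" "c \<noteq> 0" shows "c *\<^sub>R x \<in> Der a0 b0"
proof (rule D3[OF assms(1) assms(1)])
  show "c *\<^sub>R x \<noteq> 0" using assms by simp
  show "(x \<bullet> x) * (c *\<^sub>R x \<bullet> c *\<^sub>R x) = (x \<bullet> c *\<^sub>R x) * (c *\<^sub>R x \<bullet> x)"
    by (simp add: algebra_simps)
qed

lemma expand3: fixes a d e :: "real^3"
  assumes "a \<bullet> d = 0" "a \<bullet> e = 0" "d \<bullet> e = 0"
  shows "(a + y *\<^sub>R d + z *\<^sub>R e) \<bullet> (a + y' *\<^sub>R d + z' *\<^sub>R e) = a \<bullet> a + y * y' * (d \<bullet> d) + z * z' * (e \<bullet> e)"
  using assms by (simp add: inner_add_left inner_add_right inner_commute algebra_simps)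

lemma expand_a: fixes a d e :: "real^3"
  assumes "a \<bullet> d = 0" "a \<bullet> e = 0"
  shows "a \<bullet> (a + y *\<^sub>R d + z *\<^sub>R e) = a \<bullet> a"
  using assms by (simp add: inner_add_left inner_add_right)

lemma expand_b: fixes a d e :: "real^3"
  assumes "a \<bullet> d = 0" "a \<bullet> e = 0" "d \<bullet> e = 0"
  shows "(a + y *\<^sub>R d + z *\<^sub>R e) \<bullet> (a + d) = a \<bullet> a + y * (d \<bullet> d)"
  using assms by (simp add: inner_add_left inner_add_right inner_commute algebra_simps)

lemma circle:
  assumes a: "a \<in> Der a0 b0" and b: "a + d \<in> Der a0 b0" and a0: "a \<noteq> 0"
    and ad: "a \<bullet> d = 0" and ae: "a \<bullet> e = 0" and de: "d \<bullet> e = 0"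
    and c: "y^2 * (d \<bullet> d) + z^2 * (e \<bullet> e) = y * (d \<bullet> d)"
  shows "a + y *\<^sub>R d + z *\<^sub>R e \<in> Der a0 b0"
proof (rule D3[OF a b])
  let ?n = "a + y *\<^sub>R d + z *\<^sub>R e"
  have an: "a \<bullet> ?n = a \<bullet> a" by (rule expand_a[OF ad ae])
  then show "?n \<noteq> 0" using a0 by auto
  have nn: "?n \<bullet> ?n = a \<bullet> a + y * y * (d \<bullet> d) + z * z * (e \<bullet> e)" by (rule expand3[OF ad ae de])
  have nb: "?n \<bullet> (a + d) = a \<bullet> a + y * (d \<bullet> d)" by (rule expand_b[OF ad ae de])
  have ab: "a \<bullet> (a + d) = a \<bullet> a" using ad by (simp add: inner_add_right)
  show "(a \<bullet> (a + d)) * (?n \<bullet> ?n) = (a \<bullet> ?n) * (?n \<bullet> (a + d))"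
    unfolding nn nb ab an using c by (simp add: power2_eq_square algebra_simps)
qed

definition Qf :: "real^3 \<Rightarrow> real^3 \<Rightarrow> real" where "Qf a b = (a \<bullet> a) * (b \<bullet> b) - (a \<bullet> b)^2"
definition tau :: "real^3 \<Rightarrow> real^3 \<Rightarrow> real" where "tau a b = Qf a b / (a \<bullet> b)^2"

lemma prep:
  assumes a: "a \<in> Der a0 b0" and b: "b \<in> Der a0 b0" and a0: "a \<noteq> 0" and ab: "a \<bullet> b \<noteq> 0" and Q: "Qf a b > 0"
  obtains d e where "a + d \<in> Der a0 b0" "a \<bullet> d = 0" "a \<bullet> e = 0" "d \<bullet> e = 0" "e \<bullet> e > 0"
    "d \<bullet> d = tau a b * (a \<bullet> a)"
proof -
  define A where "A = a \<bullet> a"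
  define c where "c = A / (a \<bullet> b)"
  have A0: "A > 0" using a0 by (simp add: A_def)
  have c0: "c \<noteq> 0" using A0 ab by (simp add: c_def)
  have b0: "b \<noteq> 0" using ab by auto
  have bD: "c *\<^sub>R b \<in> Der a0 b0" by (rule Der_scale[OF b b0 c0])
  define d where "d = c *\<^sub>R b - a"
  define e where "e = cross3 a b"
  have ad: "a \<bullet> d = 0" using ab by (simp add: d_def c_def A_def inner_diff_right)
  have ae: "a \<bullet> e = 0" by (simp add: e_def dot_cross_self)
  have eb: "e \<bullet> b = 0" by (simp add: e_def dot_cross_self)
  have de: "d \<bullet> e = 0" using ae eb by (simp add: d_def inner_diff_left inner_commute[of _ e] inner_diff_right)
  have ee: "e \<bullet> e = Qf a b"
    using norm_cross_dot[of a b] by (simp add: e_def Qf_def power2_norm_eq_inner power_mult_distrib)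
  have dd: "d \<bullet> d = c * c * (b \<bullet> b) - A"
  proof -
    have "d \<bullet> d = c * c * (b \<bullet> b) - 2 * c * (a \<bullet> b) + A"
      by (simp add: d_def A_def inner_diff_left inner_diff_right inner_commute algebra_simps)
    moreover have "c * (a \<bullet> b) = A" using ab by (simp add: c_def)
    ultimately show ?thesis by simp
  qed
  have "d \<bullet> d = tau a b * A"
    unfolding dd tau_def Qf_def c_def A_def using ab by (simp add: field_simps power2_eq_square)
  moreover have "a + d \<in> Der a0 b0" using bD by (simp add: d_def)
  ultimately show ?thesis using that[OF _ ad ae de] ee Q by (simp add: A_def)
qed

lemma geo_step:
  assumes a: "a \<in> Der a0 b0" and b: "b \<in> Der a0 b0" and a0: "a \<noteq> 0" and ab: "a \<bullet> b \<noteq> 0" and Q: "Qf a b > 0"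
  shows "\<exists>a' b'. a' \<in> Der a0 b0 \<and> b' \<in> Der a0 b0 \<and> a' \<noteq> 0 \<and> a' \<bullet> b' \<noteq> 0 \<and> Qf a' b' > 0
     \<and> tau a' b' = tau a b + (tau a b)^2 / 4"
proof -
  obtain d e where bd: "a + d \<in> Der a0 b0" and ad: "a \<bullet> d = 0" and ae: "a \<bullet> e = 0" and de: "d \<bullet> e = 0"
    and ee: "e \<bullet> e > 0" and dd: "d \<bullet> d = tau a b * (a \<bullet> a)"
    using prep[OF a b a0 ab Q] by blast
  define A where "A = a \<bullet> a"
  define D where "D = d \<bullet> d"
  define E where "E = e \<bullet> e"
  define t where "t = tau a b"
  have A0: "A > 0" using a0 by (simp add: A_def)
  have t0: "t > 0" using Q ab by (simp add: t_def tau_def)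
  have DA: "D = t * A" using dd by (simp add: D_def t_def A_def)
  have D0: "D > 0" using DA t0 A0 by simp
  define z where "z = sqrt (D / (4 * E))"
  have zz: "z^2 * E = D / 4" using D0 ee by (simp add: z_def E_def)
  define n1 where "n1 = a + (1/2) *\<^sub>R d + z *\<^sub>R e"
  define n2 where "n2 = a + (1/2) *\<^sub>R d + (- z) *\<^sub>R e"
  have c1: "(1/2)^2 * (d \<bullet> d) + z^2 * (e \<bullet> e) = (1/2) * (d \<bullet> d)"
    using zz by (simp add: D_def E_def power2_eq_square)
  have c2: "(1/2)^2 * (d \<bullet> d) + (-z)^2 * (e \<bullet> e) = (1/2) * (d \<bullet> d)"
    using c1 by simp
  have n1D: "n1 \<in> Der a0 b0" unfolding n1_def by (rule circle[OF a bd a0 ad ae de c1])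
  have n2D: "n2 \<in> Der a0 b0" unfolding n2_def by (rule circle[OF a bd a0 ad ae de c2])
  have n12: "n1 \<bullet> n2 = A"
    unfolding n1_def n2_def expand3[OF ad ae de] using zz by (simp add: A_def D_def E_def power2_eq_square)
  have n11: "n1 \<bullet> n1 = A + D / 2"
    unfolding n1_def expand3[OF ad ae de] using zz by (simp add: A_def D_def E_def power2_eq_square)
  have n22: "n2 \<bullet> n2 = A + D / 2"
    unfolding n2_def expand3[OF ad ae de] using zz by (simp add: A_def D_def E_def power2_eq_square)
  have n10: "n1 \<noteq> 0" using n11 A0 D0 by auto
  have Qn: "Qf n1 n2 = (A + D/2)^2 - A^2" by (simp add: Qf_def n11 n22 n12 power2_eq_square)
  have Qpos: "Qf n1 n2 > 0" unfolding Qn using A0 D0 by (simp add: power2_eq_square algebra_simps add_pos_pos)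
  have "tau n1 n2 = ((A + D/2)^2 - A^2) / A^2" by (simp add: tau_def Qn n12)
  also have "\<dots> = t + t^2 / 4" using A0 unfolding DA by (simp add: field_simps power2_eq_square)
  finally have "tau n1 n2 = tau a b + (tau a b)^2 / 4" by (simp add: t_def)
  moreover have "n1 \<bullet> n2 \<noteq> 0" using n12 A0 by simp
  ultimately show ?thesis using n1D n2D n10 Qpos by blast
qed

lemma geo_base:
  assumes a: "a \<in> Der a0 b0" and b: "b \<in> Der a0 b0" and a0: "a \<noteq> 0" and ab: "a \<bullet> b \<noteq> 0" and Q: "Qf a b > 0"
    and t8: "tau a b \<ge> 8"
  shows "\<exists>x y. x \<in> Der a0 b0 \<and> y \<in> Der a0 b0 \<and> x \<bullet> y = 0"
proof -
  obtain d e where bd: "a + d \<in> Der a0 b0" and ad: "a \<bullet> d = 0" and ae: "a \<bullet> e = 0" and de: "d \<bullet> e = 0"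
    and ee: "e \<bullet> e > 0" and dd: "d \<bullet> d = tau a b * (a \<bullet> a)"
    using prep[OF a b a0 ab Q] by blast
  define A where "A = a \<bullet> a"
  define D where "D = d \<bullet> d"
  define E where "E = e \<bullet> e"
  define t where "t = tau a b"
  have A0: "A > 0" using a0 by (simp add: A_def)
  have DA: "D = t * A" using dd by (simp add: D_def t_def A_def)
  have t8': "t \<ge> 8" using t8 by (simp add: t_def)
  define s where "s = sqrt (1 - 8 / t)"
  have s0: "s \<ge> 0" and s1: "s \<le> 1" using t8' by (auto simp: s_def)
  have ss: "s^2 = 1 - 8 / t" using t8' by (simp add: s_def)
  define y where "y = (1 + s) / 4"
  have y0: "y > 0" "y < 1" using s0 s1 by (auto simp: y_def)
  define z where "z = sqrt (D * y * (1 - y) / E)"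
  have D0: "D > 0" using DA t8' A0 by simp
  have zz: "z^2 * E = D * y * (1 - y)" using D0 y0 ee by (simp add: z_def E_def)
  have c1: "y^2 * (d \<bullet> d) + z^2 * (e \<bullet> e) = y * (d \<bullet> d)"
    using zz by (simp add: D_def E_def power2_eq_square algebra_simps)
  have c2: "y^2 * (d \<bullet> d) + (-z)^2 * (e \<bullet> e) = y * (d \<bullet> d)" using c1 by simp
  have n1D: "a + y *\<^sub>R d + z *\<^sub>R e \<in> Der a0 b0" by (rule circle[OF a bd a0 ad ae de c1])
  have n2D: "a + y *\<^sub>R d + (-z) *\<^sub>R e \<in> Der a0 b0" by (rule circle[OF a bd a0 ad ae de c2])
  have key: "2 * y^2 - y = - 1 / t"
  proof -
    have "2 * y^2 - y = (s^2 - 1) / 8" by (simp add: y_def power2_eq_square field_simps)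
    also have "\<dots> = - 1 / t" using ss t8' by (simp add: field_simps)
    finally show ?thesis .
  qed
  have "(a + y *\<^sub>R d + z *\<^sub>R e) \<bullet> (a + y *\<^sub>R d + (-z) *\<^sub>R e) = A + D * (2 * y^2 - y)"
    unfolding expand3[OF ad ae de] using zz by (simp add: A_def D_def E_def power2_eq_square algebra_simps)
  also have "\<dots> = 0" unfolding key DA using t8' A0 by (simp add: field_simps)
  finally show ?thesis using n1D n2D by blast
qed

lemma Der_nonzero: "x \<in> Der a0 b0 \<Longrightarrow> a0 \<noteq> 0 \<Longrightarrow> b0 \<noteq> 0 \<Longrightarrow> x \<noteq> 0"
  by (induction rule: Der.induct) auto

lemma iter:
  assumes t0: "0 < t0"
  shows "\<forall>a b. a \<in> Der a0 b0 \<and> b \<in> Der a0 b0 \<and> a \<noteq> 0 \<and> a \<bullet> b \<noteq> 0 \<and> Qf a b > 0 \<and> tau a b \<ge> t0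
     \<and> tau a b + real k * t0^2 / 4 \<ge> 8 \<longrightarrow> (\<exists>x y. x \<in> Der a0 b0 \<and> y \<in> Der a0 b0 \<and> x \<bullet> y = 0)"
proof (induction k)
  case 0
  then show ?case using geo_base by auto
next
  case (Suc k)
  show ?case
  proof (intro allI impI)
    fix a b assume h: "a \<in> Der a0 b0 \<and> b \<in> Der a0 b0 \<and> a \<noteq> 0 \<and> a \<bullet> b \<noteq> 0 \<and> Qf a b > 0 \<and> tau a b \<ge> t0
     \<and> tau a b + real (Suc k) * t0^2 / 4 \<ge> 8"
    then obtain a' b' where h': "a' \<in> Der a0 b0" "b' \<in> Der a0 b0" "a' \<noteq> 0" "a' \<bullet> b' \<noteq> 0" "Qf a' b' > 0"
      "tau a' b' = tau a b + (tau a b)^2 / 4"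
      using geo_step[of a a0 b0 b] by blast
    have tt: "(tau a b)^2 \<ge> t0^2" using h t0 by (simp add: power_mono)
    have "tau a' b' \<ge> t0" using h' h tt by (simp add: add_increasing2)
    moreover have "tau a' b' + real k * t0^2 / 4 \<ge> 8"
    proof -
      have e1: "real (Suc k) * t0^2/4 = t0^2/4 + real k * t0^2/4" by (simp add: algebra_simps)
      show ?thesis using h' h tt e1 by linarith
    qed
    ultimately show "\<exists>x y. x \<in> Der a0 b0 \<and> y \<in> Der a0 b0 \<and> x \<bullet> y = 0"
      using Suc.IH h' by blast
  qed
qed

lemma geo:
  assumes a0: "a0 \<noteq> 0" and Q: "Qf a0 b0 > 0"
  shows "\<exists>x y. x \<in> Der a0 b0 \<and> y \<in> Der a0 b0 \<and> x \<bullet> y = 0"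
proof (cases "a0 \<bullet> b0 = 0")
  case True then show ?thesis using D1 D2 by blast
next
  case False
  define t0 where "t0 = tau a0 b0"
  have t0p: "t0 > 0" using Q False by (simp add: t0_def tau_def)
  obtain k :: nat where k: "32 / t0^2 \<le> real k" using real_arch_simple by blast
  have "real k * t0^2 / 4 \<ge> 8"
  proof -
    have "32 \<le> real k * t0^2" using k t0p by (simp add: field_simps)
    then show ?thesis by simp
  qed
  then have "tau a0 b0 + real k * t0^2 / 4 \<ge> 8" using t0p t0_def by simp
  then have "a0 \<in> Der a0 b0 \<and> b0 \<in> Der a0 b0 \<and> a0 \<noteq> 0 \<and> a0 \<bullet> b0 \<noteq> 0 \<and> Qf a0 b0 > 0 \<and> tau a0 b0 \<ge> t0
     \<and> tau a0 b0 + real k * t0^2 / 4 \<ge> 8" using D1 D2 a0 False Q t0_def by simp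
  with iter[OF t0p] show ?thesis by blast
qed



definition cspan :: "'n::finite cvec \<Rightarrow> 'n cvec set" where
  "cspan b = range (\<lambda>c. c *s b)"

lemma csubspace_cspan: "csubspace (cspan b)"
  unfolding csubspace_iff cspan_def
proof (intro conjI ballI allI impI)
  show "0 \<in> range (\<lambda>c. c *s b)" by (rule range_eqI[of _ _ 0]) simp
  fix x y assume "x \<in> range (\<lambda>c. c *s b)" "y \<in> range (\<lambda>c. c *s b)"
  then obtain c d where "x = c *s b" "y = d *s b" by blast
  then have "x + y = (c + d) *s b" by (simp add: vector_sadd_rdistrib)
  then show "x + y \<in> range (\<lambda>c. c *s b)" by (rule range_eqI)
next
  fix c x assume "x \<in> range (\<lambda>c. c *s b)"
  then obtain d where "x = d *s b" by blast
  then have "c *s x = (c * d) *s b" by (simp add: vector_smult_assoc)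
  then show "c *s x \<in> range (\<lambda>c. c *s b)" by (rule range_eqI)
qed

lemma cspan_in: "b \<in> cspan b" unfolding cspan_def by (rule range_eqI[of _ _ 1]) simp

lemma cspan_sub: "csubspace S \<Longrightarrow> b \<in> S \<Longrightarrow> cspan b \<subseteq> S"
  unfolding cspan_def using csubspace_smult by blast

lemma orth_inter0: assumes "csubspace p" "csubspace q" "\<And>x z. x \<in> p \<Longrightarrow> z \<in> q \<Longrightarrow> cinner z x = 0"
  shows "compatible p q" "p \<inter> q = {0}"
proof -
  have po: "p \<subseteq> orth q" using assms(3) by (auto simp: orth_def)
  show pq: "p \<inter> q = {0}"
  proof
    show "p \<inter> q \<subseteq> {0}"
    proof
      fix x assume "x \<in> p \<inter> q"
      then have "cinner x x = 0" using assms(3) by blast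
      then show "x \<in> {0}" by simp
    qed
    show "{0} \<subseteq> p \<inter> q" using csubspace_0[OF assms(1)] csubspace_0[OF assms(2)] by simp
  qed
  have "p \<inter> orth q = p" using po by blast
  moreover have "join {0} p = p" unfolding join_def by auto
  ultimately have "join (p \<inter> q) (p \<inter> orth q) = p" using pq by simp
  then show "compatible p q" by (simp add: compatible_def)
qed

lemma cspan_scale: assumes "c \<noteq> 0" shows "cspan (c *s v) = cspan v"
proof
  show "cspan (c *s v) \<subseteq> cspan v" unfolding cspan_def by (auto simp: vector_smult_assoc)
  show "cspan v \<subseteq> cspan (c *s v)"
  proof
    fix x assume "x \<in> cspan v"
    then obtain d where "x = d *s v" by (auto simp: cspan_def)
    then have "x = (d / c) *s (c *s v)" using assms by (simp add: vector_smult_assoc)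
    then show "x \<in> cspan (c *s v)" unfolding cspan_def by blast
  qed
qed

lemma exists_orth: assumes "CARD('n::finite) \<ge> 3"
  shows "\<exists>e::'n cvec. e \<noteq> 0 \<and> cinner u e = 0 \<and> cinner v e = 0"
proof -
  define S where "S = set [u, (\<i>::complex) *s u, v, \<i> *s v]"
  have "dim S \<le> card S" by (rule dim_le_card[OF span_superset]) (simp add: S_def)
  also have "\<dots> \<le> 4" unfolding S_def using card_length[of "[u, (\<i>::complex) *s u, v, \<i> *s v]"] by simp
  also have "4 < DIM('n cvec)" using assms by simp
  finally obtain x where x: "x \<noteq> 0" "\<And>y. y \<in> span S \<Longrightarrow> orthogonal x y"
    using orthogonal_to_subspace_exists by blast
  have o: "orthogonal x y" if "y \<in> S" for y using x(2) span_base that by blast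
  have "cinner u x = 0" using o[of u] o[of "\<i> *s u"]
    by (simp add: S_def cinner_eq_0_iff orthogonal_def inner_commute)
  moreover have "cinner v x = 0" using o[of v] o[of "\<i> *s v"]
    by (simp add: S_def cinner_eq_0_iff orthogonal_def inner_commute)
  ultimately show ?thesis using x(1) by blast
qed

lemma unit_exists: assumes "(x::'n::finite cvec) \<noteq> 0" shows "\<exists>c. c \<noteq> 0 \<and> cinner (c *s x) (c *s x) = 1"
proof -
  have p: "x \<bullet> x > 0" using assms by simp
  define c where "c = complex_of_real (1 / sqrt (x \<bullet> x))"
  have "cinner (c *s x) (c *s x) = cnj c * c * cinner x x" by (simp add: cinner_scale_left cinner_scale_right)
  also have "\<dots> = complex_of_real ((1 / sqrt (x \<bullet> x)) * (1 / sqrt (x \<bullet> x)) * (x \<bullet> x))"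
    by (simp only: c_def cinner_self complex_cnj_complex_of_real of_real_mult)
  also have "(1 / sqrt (x \<bullet> x)) * (1 / sqrt (x \<bullet> x)) * (x \<bullet> x) = 1"
  proof -
    have "sqrt (x \<bullet> x) * sqrt (x \<bullet> x) = x \<bullet> x" using p by simp
    then show ?thesis using p by (simp add: field_simps)
  qed
  finally have "cinner (c *s x) (c *s x) = 1" by simp
  moreover have "c \<noteq> 0" using p by (simp add: c_def)
  ultimately show ?thesis by blast
qed

definition on3 :: "'n::finite cvec \<Rightarrow> 'n cvec \<Rightarrow> 'n cvec \<Rightarrow> bool" where
  "on3 e1 e2 e3 \<longleftrightarrow> cinner e1 e1 = 1 \<and> cinner e2 e2 = 1 \<and> cinner e3 e3 = 1 \<and>
     cinner e1 e2 = 0 \<and> cinner e1 e3 = 0 \<and> cinner e2 e3 = 0"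

definition emb :: "'n::finite cvec \<Rightarrow> 'n cvec \<Rightarrow> 'n cvec \<Rightarrow> real^3 \<Rightarrow> 'n cvec" where
  "emb e1 e2 e3 x = complex_of_real (x$1) *s e1 + complex_of_real (x$2) *s e2 + complex_of_real (x$3) *s e3"

lemma cinner_emb: assumes "on3 e1 e2 e3"
  shows "cinner (emb e1 e2 e3 x) (emb e1 e2 e3 y) = complex_of_real (x \<bullet> y)"
proof -
  have o: "cinner e1 e1 = 1" "cinner e2 e2 = 1" "cinner e3 e3 = 1"
    "cinner e1 e2 = 0" "cinner e1 e3 = 0" "cinner e2 e3 = 0"
    "cinner e2 e1 = 0" "cinner e3 e1 = 0" "cinner e3 e2 = 0"
    using assms cinner_commute[of e1 e2] cinner_commute[of e1 e3] cinner_commute[of e2 e3]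
    by (auto simp: on3_def)
  show ?thesis
    by (simp add: emb_def cinner_add_left cinner_add_right cinner_scale_left cinner_scale_right o
        inner_vec_def sum_3)
qed

lemma emb_nonzero: "on3 e1 e2 e3 \<Longrightarrow> x \<noteq> 0 \<Longrightarrow> emb e1 e2 e3 x \<noteq> 0"
  using cinner_emb[of e1 e2 e3 x x] by auto

lemma frame:
  assumes card: "CARD('n::finite) \<ge> 3" and a0: "(a::'n cvec) \<noteq> 0" and b0: "b \<noteq> 0"
    and ab: "cspan a \<inter> cspan b = {0}" and nab: "cinner a b \<noteq> 0"
  obtains e1 e2 e3 r where "on3 e1 e2 e3" "r > 0" "cspan a = cspan (emb e1 e2 e3 (vector [1,0,0]))"
    "cspan b = cspan (emb e1 e2 e3 (vector [1,r,0]))"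
proof -
  obtain c1 where c1: "c1 \<noteq> 0" "cinner (c1 *s a) (c1 *s a) = 1" using unit_exists[OF a0] by blast
  define e1 where "e1 = c1 *s a"
  have e11: "cinner e1 e1 = 1" using c1 by (simp add: e1_def)
  define g where "g = cinner e1 b"
  have g0: "g \<noteq> 0" using c1 nab by (simp add: g_def e1_def cinner_scale_left)
  define w where "w = b - g *s e1"
  have e1w: "cinner e1 w = 0" by (simp add: w_def cinner_diff_right cinner_scale_right e11 g_def)
  have w0: "w \<noteq> 0"
  proof
    assume "w = 0"
    then have "b = (g * c1) *s a" by (simp add: w_def e1_def vector_smult_assoc)
    then have "b \<in> cspan a" unfolding cspan_def by blast
    then have "b \<in> cspan a \<inter> cspan b" using cspan_in[of b] by blast
    then show False using ab b0 by blast
  qed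
  obtain c2 where c2: "c2 \<noteq> 0" "cinner (c2 *s w) (c2 *s w) = 1" using unit_exists[OF w0] by blast
  define f where "f = c2 *s w"
  define k where "k = (1 / g) / c2"
  have k0: "k \<noteq> 0" using g0 c2 by (simp add: k_def)
  define r where "r = cmod k"
  have r0: "r > 0" using k0 by (simp add: r_def)
  define ph where "ph = k / complex_of_real r"
  have phk: "complex_of_real r * ph = k" using r0 by (simp add: ph_def)
  have cph: "cmod ph = 1" using r0 by (simp add: ph_def r_def norm_divide)
  have phph: "cnj ph * ph = 1"
  proof -
    have "complex_of_real ((cmod ph)^2) = ph * cnj ph" by (rule complex_norm_square)
    then show ?thesis using cph by (simp add: mult.commute)
  qed
  define e2 where "e2 = ph *s f"
  have e22: "cinner e2 e2 = 1"
  proof -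
    have "cinner e2 e2 = (cnj ph * ph) * cinner f f" by (simp add: e2_def cinner_scale_left cinner_scale_right mult.assoc)
    then show ?thesis using phph c2(2) by (simp add: f_def)
  qed
  have e12: "cinner e1 e2 = 0" by (simp add: e2_def f_def cinner_scale_right e1w)
  obtain e where e: "e \<noteq> 0" "cinner e1 e = 0" "cinner e2 e = 0" using exists_orth[OF card] by blast
  obtain c3 where c3: "c3 \<noteq> 0" "cinner (c3 *s e) (c3 *s e) = 1" using unit_exists[OF e(1)] by blast
  define e3 where "e3 = c3 *s e"
  have e13: "cinner e1 e3 = 0" and e23: "cinner e2 e3 = 0" using e by (simp_all add: e3_def cinner_scale_right)
  have on: "on3 e1 e2 e3" using e11 e22 c3 e12 e13 e23 by (simp add: on3_def e3_def)
  have emb1: "emb e1 e2 e3 (vector [1,0,0]) = e1" by (simp add: emb_def)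
  have emb2: "emb e1 e2 e3 (vector [1,r,0]) = e1 + (1/g) *s w"
  proof -
    have "emb e1 e2 e3 (vector [1,r,0]) = e1 + complex_of_real r *s e2" by (simp add: emb_def)
    also have "complex_of_real r *s e2 = (complex_of_real r * ph * c2) *s w"
      by (simp add: e2_def f_def vector_smult_assoc mult.assoc)
    also have "complex_of_real r * ph * c2 = 1 / g" using phk c2 by (simp add: k_def)
    finally show ?thesis .
  qed
  have "b = g *s (e1 + (1/g) *s w)" using g0 by (simp add: w_def vector_add_ldistrib vector_smult_assoc)
  then have "cspan b = cspan (e1 + (1/g) *s w)" using cspan_scale[OF g0, of "e1 + (1/g) *s w"] by simp
  then have sb: "cspan b = cspan (emb e1 e2 e3 (vector [1,r,0]))" using emb2 by simp
  have sa: "cspan a = cspan (emb e1 e2 e3 (vector [1,0,0]))" using cspan_scale[OF c1(1), of a] emb1 by (simp add: e1_def)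
  show ?thesis using that[OF on r0 sa sb] .
qed

primrec Ltm :: "'n::finite tm \<Rightarrow> 'n cvec \<Rightarrow> 'n cvec" where
  "Ltm Xvar = (\<lambda>v. v)"
| "Ltm (UApp U t) = (\<lambda>v. U *v Ltm t v)"
| "Ltm (PiApp q t) = (\<lambda>v. proj q (Ltm t v))"

locale pqm =
  fixes uI :: "'n::finite cmat \<Rightarrow> 'a \<Rightarrow> 'a"
    and piI :: "'n cvec set \<Rightarrow> 'a \<Rightarrow> 'a"
    and rel :: "'n cvec set \<Rightarrow> 'a \<Rightarrow> bool"
  assumes M: "PQM_model uI piI rel" and card3: "CARD('n) \<ge> 3"
begin

lemmas MU = M[unfolded PQM_model_def]
lemma ax_top: "rel UNIV x" using MU[THEN conjunct2, THEN conjunct1] by (simp add: Htop_def)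
lemma ax_le: "csubspace p \<Longrightarrow> csubspace q \<Longrightarrow> p \<subseteq> q \<Longrightarrow> rel p x \<Longrightarrow> rel q x"
  using MU[THEN conjunct2, THEN conjunct2, THEN conjunct1] by blast
lemma ax_meet: "csubspace p \<Longrightarrow> csubspace q \<Longrightarrow> compatible p q \<Longrightarrow> rel p x \<Longrightarrow> rel q x \<Longrightarrow> rel (p \<inter> q) x"
  using MU[THEN conjunct2, THEN conjunct2, THEN conjunct2, THEN conjunct1] by blast
lemma ax_pi: "csubspace p \<Longrightarrow> csubspace q \<Longrightarrow> rel p x \<Longrightarrow> rel (sasaki p q) (piI q x)"
  using MU[THEN conjunct2, THEN conjunct2, THEN conjunct2, THEN conjunct2, THEN conjunct1] by blast
lemma ax_pic: "csubspace p \<Longrightarrow> csubspace q \<Longrightarrow> p \<subseteq> q \<Longrightarrow> rel {0} (piI p (piI q x)) \<Longrightarrow> rel {0} (piI p x)"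
  using MU[THEN conjunct2, THEN conjunct2, THEN conjunct2, THEN conjunct2, THEN conjunct2, THEN conjunct1] 
  unfolding Hbot_def by blast
lemma ax_pibot: "csubspace q \<Longrightarrow> rel {0} (piI q x) \<Longrightarrow> rel (orth q) x"
  using MU[THEN conjunct2, THEN conjunct2, THEN conjunct2, THEN conjunct2, THEN conjunct2, THEN conjunct2, THEN conjunct1] 
  unfolding Hbot_def by blast
lemma ax_ui: "csubspace p \<Longrightarrow> unitary U \<Longrightarrow> rel p x \<Longrightarrow> rel (uimg U p) (uI U x)"
  using MU[THEN conjunct2, THEN conjunct2, THEN conjunct2, THEN conjunct2, THEN conjunct2, THEN conjunct2, THEN conjunct2, THEN conjunct1] 
  by blast
lemma ax_ue: "csubspace p \<Longrightarrow> unitary U \<Longrightarrow> rel p (uI U x) \<Longrightarrow> rel (uimg (cadj U) p) x"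
  using MU[THEN conjunct2, THEN conjunct2, THEN conjunct2, THEN conjunct2, THEN conjunct2, THEN conjunct2, THEN conjunct2, THEN conjunct2] 
  by blast

lemma FW: "csubspace p \<Longrightarrow> csubspace s \<Longrightarrow> rel p y \<Longrightarrow> rel (proj s ` p) (piI s y)"
proof -
  assume a: "csubspace p" "csubspace s" "rel p y"
  show ?thesis using ax_pi[OF a] sasaki_proj[OF a(1,2)] by simp
qed

lemma BW: assumes s: "csubspace s" and w: "csubspace w" and sw: "orth s \<subseteq> w" and r: "rel w (piI s z)"
  shows "rel w z"
proof -
  define r where "r = orth w"
  have cr: "csubspace r" by (simp add: r_def csubspace_orth)
  have rs: "r \<subseteq> s" using orth_antimono[OF sw] orth_orth[OF s] by (simp add: r_def)
  have wr: "w = orth r" by (simp add: r_def orth_orth[OF w])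
  have "rel (sasaki (orth r) r) (piI r (piI s z))"
    using ax_pi[OF csubspace_orth cr] r wr by simp
  moreover have "sasaki (orth r) r = {0}"
  proof -
    have "proj r ` orth r = {0}"
    proof
      show "proj r ` orth r \<subseteq> {0}" using proj_zero_orth[OF cr] by blast
      show "{0} \<subseteq> proj r ` orth r" using proj_zero_orth[OF cr] csubspace_0[OF csubspace_orth, of r]
        by (metis empty_subsetI image_eqI insert_subset)
    qed
    then show ?thesis using sasaki_proj[OF csubspace_orth cr] by simp
  qed
  ultimately have "rel {0} (piI r (piI s z))" by simp
  then have "rel {0} (piI r z)" using ax_pic[OF cr s rs] by blast
  then show ?thesis using ax_pibot[OF cr] wr by simp
qed

lemma meet_orth: assumes "csubspace p" "csubspace q" "\<And>x z. x \<in> p \<Longrightarrow> z \<in> q \<Longrightarrow> cinner z x = 0"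
  "rel p y" "rel q y" shows "rel {0} y"
  using ax_meet[OF assms(1,2) orth_inter0(1)[OF assms(1-3)] assms(4,5)] orth_inter0(2)[OF assms(1-3)] by simp


lemma R1: assumes ra: "rel (cspan a) y" and rb: "rel (cspan b) y" and n0: "n \<noteq> 0"
  and id: "cinner a b * cinner n n = cinner a n * cinner n b"
  shows "rel (cspan n) y"
proof -
  define s where "s = orth (cspan n)"
  have cs: "csubspace s" by (simp add: s_def csubspace_orth)
  have os: "orth s = cspan n" by (simp add: s_def orth_orth csubspace_cspan)
  define N where "N = cinner n n"
  have N0: "N \<noteq> 0" using n0 by (simp add: N_def)
  have cN: "cnj N = N" by (simp add: N_def cinner_self)
  have pf: "proj s x = x - (cinner n x / N) *s n" for x
  proof (rule proj_unique[OF cs])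
    show "x - (cinner n x / N) *s n \<in> s"
      unfolding s_def orth_def cspan_def
      using N0 by (auto simp: cinner_diff_right cinner_scale_right cinner_scale_left N_def)
    have "x - (x - (cinner n x / N) *s n) = (cinner n x / N) *s n" by simp
    moreover have "(cinner n x / N) *s n \<in> cspan n" unfolding cspan_def by blast
    ultimately show "x - (x - (cinner n x / N) *s n) \<in> orth s" using os by simp
  qed
  define Pa where "Pa = proj s a"
  define Pb where "Pb = proj s b"
  have img: "proj s ` cspan v = cspan (proj s v)" for v
    unfolding cspan_def image_image using proj_smult[OF cs] by auto
  have r1: "rel (cspan Pa) (piI s y)" using FW[OF csubspace_cspan cs ra] img by (simp add: Pa_def)
  have r2: "rel (cspan Pb) (piI s y)" using FW[OF csubspace_cspan cs rb] img by (simp add: Pb_def)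
  have "cinner Pa Pb = cinner a b - (cinner n b / N) * cinner a n - cnj (cinner n a / N) * cinner n b
      + cnj (cinner n a / N) * (cinner n b / N) * N"
    unfolding Pa_def Pb_def pf
    by (simp add: cinner_diff_left cinner_diff_right cinner_scale_left cinner_scale_right N_def algebra_simps)
  also have "cnj (cinner n a / N) = cinner a n / N" using cN by (simp add: cinner_commute[of a n])
  finally have "cinner Pa Pb = cinner a b - (cinner n b / N) * cinner a n - (cinner a n / N) * cinner n b
      + (cinner a n / N) * (cinner n b / N) * N" .
  also have "\<dots> = (cinner a b * N - cinner a n * cinner n b) / N" using N0 by (simp add: field_simps)
  also have "\<dots> = 0" using id by (simp add: N_def)
  finally have pab: "cinner Pa Pb = 0" .
  have "cinner z x = 0" if xz: "x \<in> cspan Pa" "z \<in> cspan Pb" for x z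
  proof -
    obtain c d where "x = c *s Pa" "z = d *s Pb" using xz by (auto simp: cspan_def)
    then show ?thesis using pab cinner_commute[of Pb Pa] by (simp add: cinner_scale_left cinner_scale_right)
  qed
  then have "rel {0} (piI s y)" using meet_orth[OF csubspace_cspan csubspace_cspan _ r1 r2] by blast
  then show ?thesis using ax_pibot[OF cs] os by simp
qed

lemma transferD:
  assumes on: "on3 e1 e2 e3" and A0: "A0 \<noteq> 0" and B0: "B0 \<noteq> 0"
    and rA: "rel (cspan (emb e1 e2 e3 A0)) y" and rB: "rel (cspan (emb e1 e2 e3 B0)) y"
    and x: "x \<in> Der A0 B0"
  shows "rel (cspan (emb e1 e2 e3 x)) y"
  using x
proof (induction rule: Der.induct)
  case D1 then show ?case using rA .
next
  case D2 then show ?case using rB .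
next
  case (D3 x z w)
  have "cinner (emb e1 e2 e3 x) (emb e1 e2 e3 z) * cinner (emb e1 e2 e3 w) (emb e1 e2 e3 w)
      = cinner (emb e1 e2 e3 x) (emb e1 e2 e3 w) * cinner (emb e1 e2 e3 w) (emb e1 e2 e3 z)"
    unfolding cinner_emb[OF on] of_real_mult[symmetric] using D3.hyps(4) by simp
  then show ?case using R1[OF D3.IH(1) D3.IH(2) emb_nonzero[OF on D3.hyps(3)]] by blast
qed

lemma lines_core: assumes a0: "a \<noteq> 0" and b0: "b \<noteq> 0" and ab: "cspan a \<inter> cspan b = {0}"
  and nab: "cinner a b \<noteq> 0" and ra: "rel (cspan a) y" and rb: "rel (cspan b) y" shows "rel {0} y"
proof -
  obtain e1 e2 e3 r where on: "on3 e1 e2 e3" and r0: "r > 0"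
    and sa: "cspan a = cspan (emb e1 e2 e3 (vector [1,0,0]))"
    and sb: "cspan b = cspan (emb e1 e2 e3 (vector [1,r,0]))"
    using frame[OF card3 a0 b0 ab nab] by blast
  define A0 :: "real^3" where "A0 = vector [1,0,0]"
  define B0 :: "real^3" where "B0 = vector [1,r,0]"
  have A00: "A0 \<noteq> 0" by (simp add: A0_def vec_eq_iff) (metis vector_3(1) zero_index zero_neq_one)
  have B00: "B0 \<noteq> 0" by (simp add: B0_def vec_eq_iff) (metis vector_3(1) zero_index zero_neq_one)
  have Q: "Qf A0 B0 > 0" using r0 by (simp add: Qf_def A0_def B0_def inner_vec_def sum_3 power2_eq_square)
  obtain x z where xz: "x \<in> Der A0 B0" "z \<in> Der A0 B0" "x \<bullet> z = 0" using geo[OF A00 Q] by blast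
  have rA: "rel (cspan (emb e1 e2 e3 A0)) y" using ra sa by (simp add: A0_def)
  have rB: "rel (cspan (emb e1 e2 e3 B0)) y" using rb sb by (simp add: B0_def)
  have rx: "rel (cspan (emb e1 e2 e3 x)) y" by (rule transferD[OF on A00 B00 rA rB xz(1)])
  have rz: "rel (cspan (emb e1 e2 e3 z)) y" by (rule transferD[OF on A00 B00 rA rB xz(2)])
  have "cinner v u = 0" if uv: "u \<in> cspan (emb e1 e2 e3 x)" "v \<in> cspan (emb e1 e2 e3 z)" for u v
  proof -
    obtain c d where "u = c *s emb e1 e2 e3 x" "v = d *s emb e1 e2 e3 z" using uv by (auto simp: cspan_def)
    then show ?thesis using cinner_emb[OF on, of z x] xz(3) by (simp add: cinner_scale_left cinner_scale_right inner_commute)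
  qed
  then show ?thesis using meet_orth[OF csubspace_cspan csubspace_cspan _ rx rz] by blast
qed

lemma claim0: "csubspace p \<Longrightarrow> csubspace q \<Longrightarrow> p \<inter> q = {0} \<Longrightarrow> rel p y \<Longrightarrow> rel q y \<Longrightarrow> rel {0} y"
proof (induction "dim p + dim q" arbitrary: p q y rule: less_induct)
  case less
  have step: "rel {0} y" if cp': "csubspace p'" and cq': "csubspace q'" and pq': "p' \<inter> q' = {0}"
    and rp': "rel p' y" and rq': "rel q' y" and dd: "dim p' + dim q' = dim p + dim q"
    and b: "b \<in> q'" "b \<noteq> 0" "q' \<noteq> cspan b" for p' q' b
  proof -
    define t where "t = cspan b"
    define s where "s = orth t"
    have ct: "csubspace t" by (simp add: t_def csubspace_cspan)
    have cs: "csubspace s" by (simp add: s_def csubspace_orth)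
    have ost: "orth s = t" by (simp add: s_def orth_orth[OF ct])
    have tq: "t \<subseteq> q'" by (simp add: t_def cspan_sub[OF cq' b(1)])
    define P1 where "P1 = proj s ` p'"
    define Q1 where "Q1 = proj s ` q'"
    have cP1: "csubspace P1" by (simp add: P1_def csubspace_image clinear_proj cs cp')
    have cQ1: "csubspace Q1" by (simp add: Q1_def csubspace_image clinear_proj cs cq')
    have rP1: "rel P1 (piI s y)" using FW[OF cp' cs rp'] by (simp add: P1_def)
    have rQ1: "rel Q1 (piI s y)" using FW[OF cq' cs rq'] by (simp add: Q1_def)
    have projq: "proj s v \<in> q'" if "v \<in> q'" for v
    proof -
      have "v - proj s v \<in> q'" using proj_orth[OF cs, of v] ost tq by blast
      then have "v - (v - proj s v) \<in> q'" using csubspace_diff[OF cq' that] by blast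
      then show ?thesis by simp
    qed
    have Q1sub: "Q1 \<subseteq> q'" using projq by (auto simp: Q1_def)
    have P1Q1: "P1 \<inter> Q1 = {0}"
    proof
      show "P1 \<inter> Q1 \<subseteq> {0}"
      proof
        fix z assume z: "z \<in> P1 \<inter> Q1"
        then obtain x where x: "x \<in> p'" "z = proj s x" by (auto simp: P1_def)
        have zq: "z \<in> q'" using z Q1sub by blast
        have "x - z \<in> q'" using proj_orth[OF cs, of x] ost tq x(2) by blast
        then have "(x - z) + z \<in> q'" using csubspace_add[OF cq' _ zq] by blast
        then have "x \<in> q'" by simp
        then have "x = 0" using x(1) pq' by blast
        then show "z \<in> {0}" using x(2) clinear_zero[OF clinear_proj[OF cs]] by simp
      qed
      show "{0} \<subseteq> P1 \<inter> Q1" using csubspace_0[OF cP1] csubspace_0[OF cQ1] by simp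
    qed
    have dP1: "dim P1 \<le> dim p'" unfolding P1_def
      by (rule dim_image_le[OF clinear_linear[OF clinear_proj[OF cs]]])
    have bnot: "b \<notin> Q1"
    proof
      assume "b \<in> Q1"
      then have "b \<in> s" using proj_in[OF cs] by (auto simp: Q1_def)
      moreover have "b \<in> t" by (simp add: t_def cspan_in)
      ultimately have "cinner b b = 0" by (simp add: s_def orth_def)
      then show False using b(2) by simp
    qed
    have dQ1: "dim Q1 < dim q'"
    proof (rule dim_psubset)
      show "span Q1 \<subset> span q'" unfolding csubspace_span[OF cQ1] csubspace_span[OF cq'] using Q1sub bnot b(1) by blast
    qed
    have "rel {0} (piI s y)"
      using less.hyps[OF _ cP1 cQ1 P1Q1 rP1 rQ1] dP1 dQ1 dd by linarith
    then have rt: "rel t y" using ax_pibot[OF cs] ost by simp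
    have pt: "p' \<inter> t = {0}" using pq' tq csubspace_0[OF cp'] csubspace_0[OF ct] by blast
    have dt: "dim t < dim q'"
    proof (rule dim_psubset)
      show "span t \<subset> span q'" unfolding csubspace_span[OF ct] csubspace_span[OF cq'] using tq b(3) t_def by blast
    qed
    show ?thesis using less.hyps[OF _ cp' ct pt rp' rt] dt dd by linarith
  qed
  show ?case
  proof (cases "p = {0} \<or> q = {0}")
    case True
    then show ?thesis using less.prems by auto
  next
    case False
    then have pne: "p \<noteq> {0}" and qne: "q \<noteq> {0}" by auto
    obtain a where a: "a \<in> p" "a \<noteq> 0" using pne csubspace_0[OF less.prems(1)] by blast
    obtain b where b: "b \<in> q" "b \<noteq> 0" using qne csubspace_0[OF less.prems(2)] by blast
    show ?thesis
    proof (cases "p = cspan a \<and> q = cspan b")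
      case False
      then have "p \<noteq> cspan a \<or> q \<noteq> cspan b" by blast
      then show ?thesis
      proof
        assume "p \<noteq> cspan a"
        moreover have "q \<inter> p = {0}" using less.prems(3) by blast
        ultimately show ?thesis using step[OF less.prems(2,1) _ less.prems(5,4) _ a] by simp
      next
        assume "q \<noteq> cspan b"
        then show ?thesis using step[OF less.prems(1,2,3,4,5) _ b] by simp
      qed
    next
      case True
      show ?thesis
      proof (cases "cinner a b = 0")
        case True
        have "cinner z x = 0" if xz: "x \<in> p" "z \<in> q" for x z
        proof -
          obtain c d where "x = c *s a" "z = d *s b" using xz \<open>p = cspan a \<and> q = cspan b\<close>
            by (auto simp: cspan_def)
          then show ?thesis using True cinner_commute[of b a]
            by (simp add: cinner_scale_left cinner_scale_right)
        qed
        then show ?thesis using meet_orth[OF less.prems(1,2) _ less.prems(4,5)] by blast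
      next
        case False
        then show ?thesis using lines_core[OF a(2) b(2) _ False] less.prems \<open>p = cspan a \<and> q = cspan b\<close>
          by simp
      qed
    qed
  qed
qed

lemma claim: assumes "csubspace p" "csubspace q" "rel p y" "rel q y" shows "rel (p \<inter> q) y"
proof -
  define w where "w = p \<inter> q"
  define s where "s = orth w"
  have cw: "csubspace w" by (simp add: w_def csubspace_inter assms)
  have cs: "csubspace s" by (simp add: s_def csubspace_orth)
  have ow: "orth s = w" by (simp add: s_def orth_orth[OF cw])
  define P1 where "P1 = proj s ` p"
  define Q1 where "Q1 = proj s ` q"
  have cP1: "csubspace P1" by (simp add: P1_def csubspace_image clinear_proj cs assms)
  have cQ1: "csubspace Q1" by (simp add: Q1_def csubspace_image clinear_proj cs assms)
  have rP1: "rel P1 (piI s y)" using FW[OF assms(1) cs assms(3)] by (simp add: P1_def)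
  have rQ1: "rel Q1 (piI s y)" using FW[OF assms(2) cs assms(4)] by (simp add: Q1_def)
  have P1Q1: "P1 \<inter> Q1 = {0}"
  proof
    show "P1 \<inter> Q1 \<subseteq> {0}"
    proof
      fix z assume z: "z \<in> P1 \<inter> Q1"
      then obtain x x' where x: "x \<in> p" "z = proj s x" "x' \<in> q" "z = proj s x'"
        by (auto simp: P1_def Q1_def)
      have "x - z \<in> w" using proj_orth[OF cs, of x] ow x(2) by blast
      then have "x - (x - z) \<in> p" using csubspace_diff[OF assms(1) x(1)] w_def by blast
      then have zp: "z \<in> p" by simp
      have "x' - z \<in> w" using proj_orth[OF cs, of x'] ow x(4) by blast
      then have "x' - (x' - z) \<in> q" using csubspace_diff[OF assms(2) x(3)] w_def by blast
      then have zq: "z \<in> q" by simp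
      have "z \<in> s" using proj_in[OF cs] x(2) by simp
      then have "cinner z z = 0" using zp zq by (simp add: s_def orth_def w_def)
      then show "z \<in> {0}" by simp
    qed
    show "{0} \<subseteq> P1 \<inter> Q1" using csubspace_0[OF cP1] csubspace_0[OF cQ1] by simp
  qed
  have "rel {0} (piI s y)" by (rule claim0[OF cP1 cQ1 P1Q1 rP1 rQ1])
  then have "rel w (piI s y)" using ax_le[OF csubspace_zero cw _] csubspace_0[OF cw] by blast
  then have "rel w y" using BW[OF cs cw] ow by simp
  then show ?thesis by (simp add: w_def)
qed


lemma PiBack: assumes cq: "csubspace q" and cp: "csubspace p" and r: "rel p (piI q z)"
  shows "rel {w. proj q w \<in> p} z"
proof -
  have "rel (sasaki UNIV q) (piI q z)" by (rule ax_pi[OF csubspace_UNIV cq ax_top])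
  moreover have "sasaki UNIV q = q"
  proof -
    have "join (orth q) UNIV = UNIV"
    proof (rule set_eqI)
      fix v :: "'n cvec"
      have "v = 0 + v" by simp
      then show "v \<in> join (orth q) UNIV \<longleftrightarrow> v \<in> UNIV"
        unfolding join_def using csubspace_0[OF csubspace_orth, of q] by blast
    qed
    then show ?thesis by (simp add: sasaki_def)
  qed
  ultimately have "rel q (piI q z)" by simp
  then have "rel (p \<inter> q) (piI q z)" using claim[OF cp cq r] by simp
  moreover have cj: "csubspace (join (p \<inter> q) (orth q))" by (simp add: csubspace_join csubspace_inter cp cq csubspace_orth)
  moreover have "p \<inter> q \<subseteq> join (p \<inter> q) (orth q)"
    unfolding join_def using csubspace_0[OF csubspace_orth, of q] by force
  ultimately have "rel (join (p \<inter> q) (orth q)) (piI q z)"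
    using ax_le[OF csubspace_inter[OF cp cq] cj] by blast
  moreover have "orth q \<subseteq> join (p \<inter> q) (orth q)"
    unfolding join_def using csubspace_0[OF cp] csubspace_0[OF cq] by force
  ultimately have r2: "rel (join (p \<inter> q) (orth q)) z" using BW[OF cq cj] by blast
  have "join (p \<inter> q) (orth q) \<subseteq> {w. proj q w \<in> p}"
  proof
    fix w assume "w \<in> join (p \<inter> q) (orth q)"
    then obtain a b where ab: "a \<in> p" "a \<in> q" "b \<in> orth q" "w = a + b" by (auto simp: join_def)
    have "proj q w = a" by (rule proj_unique[OF cq ab(2)]) (simp add: ab)
    then show "w \<in> {w. proj q w \<in> p}" using ab by simp
  qed
  moreover have "csubspace {w. proj q w \<in> p}" by (rule csubspace_preimage[OF clinear_proj[OF cq] cp])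
  ultimately show ?thesis using ax_le[OF cj] r2 by blast
qed

end

lemma clinear_Ltm: "wf_tm t \<Longrightarrow> clinear (Ltm t)"
proof (induction t)
  case Xvar then show ?case by (simp add: clinear_id)
next
  case (UApp U t) then show ?case using clinear_comp[OF clinear_mat[of U], of "Ltm t"] by simp
next
  case (PiApp q t) then show ?case using clinear_comp[OF clinear_proj[of q], of "Ltm t"] by simp
qed

lemma uimg_cadj: assumes U: "unitary U" shows "uimg (cadj U) p = {v. U *v v \<in> p}"
proof
  show "uimg (cadj U) p \<subseteq> {v. U *v v \<in> p}"
  proof
    fix v assume "v \<in> uimg (cadj U) p"
    then obtain w where w: "w \<in> p" "v = cadj U *v w" by (auto simp: uimg_def)
    have "U *v v = (U ** cadj U) *v w" by (simp add: w(2) matrix_vector_mul_assoc)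
    also have "\<dots> = w" using U by (simp add: unitary_def)
    finally show "v \<in> {v. U *v v \<in> p}" using w by simp
  qed
  show "{v. U *v v \<in> p} \<subseteq> uimg (cadj U) p"
  proof
    fix v assume "v \<in> {v. U *v v \<in> p}"
    moreover have "v = (cadj U ** U) *v v" using U by (simp add: unitary_def)
    then have "v = cadj U *v (U *v v)" by (simp add: matrix_vector_mul_assoc)
    ultimately show "v \<in> uimg (cadj U) p" unfolding uimg_def by blast
  qed
qed

lemma eval_H: "wf_tm t \<Longrightarrow> csubspace x \<Longrightarrow> eval_tm H_u H_pi t x = Ltm t ` x"
proof (induction t)
  case Xvar then show ?case by simp
next
  case (UApp U t)
  then show ?case by (simp add: H_u_def uimg_def image_image)
next
  case (PiApp q t)
  have wt: "wf_tm t" and cq: "csubspace q" using PiApp.prems(1) by auto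
  have c: "csubspace (Ltm t ` x)" using csubspace_image[OF clinear_Ltm[OF wt] PiApp.prems(2)] .
  have "eval_tm H_u H_pi (PiApp q t) x = sasaki (eval_tm H_u H_pi t x) q" by (simp add: H_pi_def)
  also have "\<dots> = sasaki (Ltm t ` x) q" using PiApp.IH[OF wt PiApp.prems(2)] by simp
  also have "\<dots> = proj q ` (Ltm t ` x)" using sasaki_proj[OF c cq] .
  finally show ?case by (simp add: image_image)
qed

context pqm begin

lemma BWt: "wf_tm t \<Longrightarrow> csubspace p \<Longrightarrow> rel p (eval_tm uI piI t a) \<Longrightarrow> rel {v. Ltm t v \<in> p} a"
proof (induction t arbitrary: p)
  case Xvar then show ?case by simp
next
  case (UApp U t)
  have wt: "wf_tm t" and uU: "unitary U" using UApp.prems(1) by auto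
  have "rel (uimg (cadj U) p) (eval_tm uI piI t a)" using ax_ue[OF UApp.prems(2) uU] UApp.prems(3) by simp
  moreover have "uimg (cadj U) p = {v. U *v v \<in> p}" using uimg_cadj[OF uU] .
  moreover have "csubspace {v. U *v v \<in> p}" using csubspace_preimage[OF clinear_mat UApp.prems(2)] .
  ultimately have "rel {v. Ltm t v \<in> {v. U *v v \<in> p}} a" using UApp.IH[OF wt, of "{v. U *v v \<in> p}"] by simp
  then show ?case by simp
next
  case (PiApp q t)
  have wt: "wf_tm t" and cq: "csubspace q" using PiApp.prems(1) by auto
  have "rel {w. proj q w \<in> p} (eval_tm uI piI t a)" using PiBack[OF cq PiApp.prems(2)] PiApp.prems(3) by simp
  moreover have "csubspace {w. proj q w \<in> p}" using csubspace_preimage[OF clinear_proj[OF cq] PiApp.prems(2)] .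
  ultimately have "rel {v. Ltm t v \<in> {w. proj q w \<in> p}} a" using PiApp.IH[OF wt, of "{w. proj q w \<in> p}"] by simp
  then show ?case by simp
qed

lemma FWt: "wf_tm t \<Longrightarrow> csubspace r \<Longrightarrow> rel r a \<Longrightarrow> rel (Ltm t ` r) (eval_tm uI piI t a)"
proof (induction t)
  case Xvar then show ?case by simp
next
  case (UApp U t)
  have wt: "wf_tm t" and uU: "unitary U" using UApp.prems(1) by auto
  have c: "csubspace (Ltm t ` r)" using csubspace_image[OF clinear_Ltm[OF wt] UApp.prems(2)] .
  have "rel (uimg U (Ltm t ` r)) (eval_tm uI piI (UApp U t) a)" using ax_ui[OF c uU] UApp.IH[OF wt UApp.prems(2,3)] by simp
  then show ?case by (simp add: uimg_def image_image)
next
  case (PiApp q t)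
  have wt: "wf_tm t" and cq: "csubspace q" using PiApp.prems(1) by auto
  have c: "csubspace (Ltm t ` r)" using csubspace_image[OF clinear_Ltm[OF wt] PiApp.prems(2)] .
  have "rel (proj q ` (Ltm t ` r)) (eval_tm uI piI (PiApp q t) a)" using FW[OF c cq] PiApp.IH[OF wt PiApp.prems(2,3)] by simp
  then show ?case by (simp add: image_image)
qed

end

fun Spos :: "'n::finite lit list \<Rightarrow> 'n cvec set" where
  "Spos [] = UNIV"
| "Spos (Lit b t p # ls) = (if b then {v. Ltm t v \<in> p} \<inter> Spos ls else Spos ls)"

lemma csubspace_Spos: "\<forall>l\<in>set phi. wf_lit l \<Longrightarrow> csubspace (Spos phi)"
proof (induction phi)
  case Nil then show ?case by (simp add: csubspace_UNIV)
next
  case (Cons l ls)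
  obtain b t p where l: "l = Lit b t p" by (cases l)
  have c1: "csubspace (Spos ls)" using Cons by simp
  have "wf_tm t" "csubspace p" using Cons.prems l by auto
  then have c2: "csubspace {v. Ltm t v \<in> p}" using csubspace_preimage clinear_Ltm by blast
  show ?case using c1 csubspace_inter[OF c2 c1] l by simp
qed

lemma Spos_pos: "Lit True t p \<in> set phi \<Longrightarrow> v \<in> Spos phi \<Longrightarrow> Ltm t v \<in> p"
proof (induction phi)
  case Nil then show ?case by simp
next
  case (Cons l ls)
  obtain b t' p' where l: "l = Lit b t' p'" by (cases l)
  then show ?case using Cons by (auto split: if_splits)
qed

context pqm begin

lemma rel_Spos: "\<forall>l\<in>set phi. wf_lit l \<Longrightarrow> sat_conj uI piI rel phi a \<Longrightarrow> rel (Spos phi) a"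
proof (induction phi)
  case Nil then show ?case by (simp add: ax_top)
next
  case (Cons l ls)
  obtain b t p where l: "l = Lit b t p" by (cases l)
  have ih: "rel (Spos ls) a" using Cons by (simp add: sat_conj_def)
  have "\<forall>l\<in>set ls. wf_lit l" using Cons.prems(1) by simp
  then have cls: "csubspace (Spos ls)" by (rule csubspace_Spos)
  show ?case
  proof (cases b)
    case True
    have "rel p (eval_tm uI piI t a)" using Cons.prems l True by (simp add: sat_conj_def)
    have wt: "wf_tm t" and cp: "csubspace p" using Cons.prems(1) l by auto
    have "rel {v. Ltm t v \<in> p} a" using BWt[OF wt cp] \<open>rel p (eval_tm uI piI t a)\<close> by simp
    moreover have "csubspace {v. Ltm t v \<in> p}" using csubspace_preimage[OF clinear_Ltm[OF wt] cp] .
    moreover note cls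
    ultimately show ?thesis using claim[OF _ _ _ ih] l True by simp
  next
    case False then show ?thesis using ih l by simp
  qed
qed

end

theorem mainTheorem12:
  fixes uI :: "'n::finite cmat \<Rightarrow> 'a \<Rightarrow> 'a"
    and piI :: "'n cvec set \<Rightarrow> 'a \<Rightarrow> 'a"
    and rel :: "'n cvec set \<Rightarrow> 'a \<Rightarrow> bool"
    and phi :: "'n lit list"
  assumes "CARD('n) \<ge> 3"
    and "PQM_model uI piI rel"
    and "\<forall>l\<in>set phi. wf_lit l"
    and "\<exists>x. sat_conj uI piI rel phi x"
  shows "\<exists>x. csubspace x \<and> sat_conj H_u H_pi H_rel phi x"
proof -
  interpret pqm uI piI rel using assms(1,2) by (simp add: pqm_def)
  obtain a where a: "sat_conj uI piI rel phi a" using assms(4) by blast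
  define S where "S = Spos phi"
  have cS: "csubspace S" using csubspace_Spos assms(3) by (simp add: S_def)
  have rS: "rel S a" using rel_Spos assms(3) a by (simp add: S_def)
  have "sat_lit H_u H_pi H_rel l S" if l: "l \<in> set phi" for l
  proof -
    obtain b t p where lb: "l = Lit b t p" by (cases l)
    have wt: "wf_tm t" and cp: "csubspace p" using assms(3) l lb by auto
    have ev: "eval_tm H_u H_pi t S = Ltm t ` S" using eval_H[OF wt cS] .
    show ?thesis
    proof (cases b)
      case True
      then have "Lit True t p \<in> set phi" using l lb by simp
      then have "Ltm t ` S \<subseteq> p" using Spos_pos S_def by blast
      then show ?thesis using lb True ev by (simp add: H_rel_def)
    next
      case False
      have ns: "\<not> rel p (eval_tm uI piI t a)" using a l lb False by (auto simp: sat_conj_def)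
      have "\<not> Ltm t ` S \<subseteq> p"
      proof
        assume sub: "Ltm t ` S \<subseteq> p"
        have "rel (Ltm t ` S) (eval_tm uI piI t a)" by (rule FWt[OF wt cS rS])
        moreover have "csubspace (Ltm t ` S)" using csubspace_image[OF clinear_Ltm[OF wt] cS] .
        ultimately have "rel p (eval_tm uI piI t a)" using ax_le[OF _ cp sub] by blast
        then show False using ns by simp
      qed
      then show ?thesis using lb False ev by (simp add: H_rel_def)
    qed
  qed
  then show ?thesis using cS by (auto simp: sat_conj_def)
qed

end
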